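(* Let $m>1$ be an integer and $0<\gamma<\frac12$. Then $\delta\mapsto F(m,\gamma,\delta)$ is non-increasing on $[0,1]$.
   Context: Logarithms base 2; $h$ is binary entropy; $\|u\|$ is Hamming weight. For an integer $m\ge1$, $\gamma\in(0,\frac12)$ and $\delta\in[0,1]$, let $H^*(m,\gamma,\delta)$ be the maximum entropy of a probability distribution $Q$ on $\mathbb{F}_2^m$ satisfying $\Pr_{u\sim Q}(u_i=1)=\gamma$ for all $1\le i\le m$ and $\Pr_{u\sim Q}(\|u\|\text{ odd})=\delta$; set $F(m,\gamma,\delta)=H^*(m,\gamma,\delta)-h(\delta)$ if such $Q$ exists and $F(m,\gamma,\delta)=-\infty$ otherwise. *)

theory Defs
  imports "HOL-Analysis.Analysis" "HOL-Library.Extended_Real"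
begin

text \<open>Vectors u in F_2^m are represented by their supports: subsets of {..<m}.
  A probability distribution Q on F_2^m is a function on these subsets.
  The Hamming weight of u is card u.\<close>

definition hamming_space :: "nat \<Rightarrow> nat set set" where
  "hamming_space m = Pow {..<m}"

definition bin_entropy :: "real \<Rightarrow> real" where
  "bin_entropy x = - (x * log 2 x) - (1 - x) * log 2 (1 - x)"

definition entropy_dist :: "nat \<Rightarrow> (nat set \<Rightarrow> real) \<Rightarrow> real" where
  "entropy_dist m Q = (\<Sum>u\<in>hamming_space m. - (Q u * log 2 (Q u)))"

definition feasible :: "nat \<Rightarrow> real \<Rightarrow> real \<Rightarrow> (nat set \<Rightarrow> real) \<Rightarrow> bool" where
  "feasible m \<gamma> \<delta> Q \<longleftrightarrow>
     (\<forall>u\<in>hamming_space m. Q u \<ge> 0) \<and>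
     (\<Sum>u\<in>hamming_space m. Q u) = 1 \<and>
     (\<forall>i<m. (\<Sum>u\<in>{u\<in>hamming_space m. i \<in> u}. Q u) = \<gamma>) \<and>
     (\<Sum>u\<in>{u\<in>hamming_space m. odd (card u)}. Q u) = \<delta>"

definition Hstar :: "nat \<Rightarrow> real \<Rightarrow> real \<Rightarrow> ereal" where
  "Hstar m \<gamma> \<delta> = Sup {ereal (entropy_dist m Q) | Q. feasible m \<gamma> \<delta> Q}"

definition F :: "nat \<Rightarrow> real \<Rightarrow> real \<Rightarrow> ereal" where
  "F m \<gamma> \<delta> = (if \<exists>Q. feasible m \<gamma> \<delta> Q
                 then Hstar m \<gamma> \<delta> - ereal (bin_entropy \<delta>) else - \<infinity>)"

end

theory Submission
  imports Defs
begin

lemma inj_insert_Pow: "a \<notin> S \<Longrightarrow> inj_on (insert a) (Pow S)"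
  unfolding inj_on_def by (metis Pow_iff insert_ident subset_iff)

lemma gf_pow:
  fixes x :: real
  assumes "finite S"
  shows "(\<Sum>u\<in>Pow S. x ^ card u) = (1 + x) ^ card S"
  using assms
proof (induction S rule: finite_induct)
  case empty then show ?case by simp
next
  case (insert a S)
  have disj: "Pow S \<inter> insert a ` Pow S = {}" using insert.hyps by auto
  have fin: "finite (Pow S)" using insert.hyps by simp
  have "(\<Sum>u\<in>Pow (insert a S). x ^ card u) =
        (\<Sum>u\<in>Pow S. x ^ card u) + (\<Sum>u\<in>insert a ` Pow S. x ^ card u)"
    unfolding Pow_insert by (rule sum.union_disjoint) (use fin disj in auto)
  also have "(\<Sum>u\<in>insert a ` Pow S. x ^ card u) = (\<Sum>u\<in>Pow S. x ^ card (insert a u))"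
    by (rule sum.reindex[OF inj_insert_Pow[OF insert.hyps(2)], unfolded comp_def])
  also have "\<dots> = (\<Sum>u\<in>Pow S. x * x ^ card u)"
  proof (rule sum.cong)
    fix u assume "u \<in> Pow S"
    then have "finite u" "a \<notin> u" using insert.hyps finite_subset by auto
    then show "x ^ card (insert a u) = x * x ^ card u" by simp
  qed simp
  finally show ?case using insert by (simp add: sum_distrib_left[symmetric] algebra_simps)
qed

lemma gf_pow_i:
  fixes x :: real
  assumes "i < m"
  shows "(\<Sum>u\<in>{u\<in>Pow {..<m}. i \<in> u}. x ^ card u) = x * (1 + x) ^ (m - 1)"
proof -
  let ?S = "{..<m} - {i}"
  have eq: "{u\<in>Pow {..<m}. i \<in> u} = insert i ` Pow ?S"
  proof (intro set_eqI iffI)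
    fix u assume u: "u \<in> {u\<in>Pow {..<m}. i \<in> u}"
    then have "u = insert i (u - {i})" by blast
    moreover have "u - {i} \<in> Pow ?S" using u by blast
    ultimately show "u \<in> insert i ` Pow ?S" by (rule image_eqI)
  next
    fix u assume "u \<in> insert i ` Pow ?S"
    then show "u \<in> {u\<in>Pow {..<m}. i \<in> u}" using assms by blast
  qed
  have "(\<Sum>u\<in>{u\<in>Pow {..<m}. i \<in> u}. x ^ card u) = (\<Sum>u\<in>Pow ?S. x ^ card (insert i u))"
    unfolding eq by (rule sum.reindex[OF inj_insert_Pow, unfolded comp_def]) simp
  also have "\<dots> = (\<Sum>u\<in>Pow ?S. x * x ^ card u)"
  proof (rule sum.cong)
    fix u assume "u \<in> Pow ?S"
    then have "finite u" "i \<notin> u" using finite_subset by auto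
    then show "x ^ card (insert i u) = x * x ^ card u" by simp
  qed simp
  also have "\<dots> = x * (1 + x) ^ card ?S" by (simp add: sum_distrib_left[symmetric] gf_pow)
  finally show ?thesis using assms by simp
qed

lemma card_as_sum:
  fixes m :: nat
  assumes "u \<subseteq> {..<m}"
  shows "real (card u) = (\<Sum>i<m. of_bool (i \<in> u))"
proof -
  have e: "{..<m} \<inter> {i. i \<in> u} = u" using assms by blast
  have "(\<Sum>i<m. of_bool (i \<in> u)::real) = of_nat (card ({..<m} \<inter> {i. i \<in> u}))"
    by (rule sum_of_bool_eq) simp_all
  then show ?thesis unfolding e by simp
qed

lemma weight_sum:
  fixes Q :: "nat set \<Rightarrow> real"
  shows "(\<Sum>u\<in>hamming_space m. Q u * card u) = (\<Sum>i<m. \<Sum>u\<in>{u\<in>hamming_space m. i \<in> u}. Q u)"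
proof -
  have "(\<Sum>u\<in>hamming_space m. Q u * card u) = (\<Sum>u\<in>hamming_space m. \<Sum>i<m. if i \<in> u then Q u else 0)"
  proof (rule sum.cong)
    fix u assume "u \<in> hamming_space m"
    then have "real (card u) = (\<Sum>i<m. of_bool (i \<in> u))"
      by (intro card_as_sum) (simp add: hamming_space_def)
    then have "Q u * real (card u) = (\<Sum>i<m. Q u * of_bool (i \<in> u))"
      by (simp add: sum_distrib_left)
    also have "\<dots> = (\<Sum>i<m. if i \<in> u then Q u else 0)"
      by (rule sum.cong) auto
    finally show "Q u * real (card u) = (\<Sum>i<m. if i \<in> u then Q u else 0)" .
  qed simp
  also have "\<dots> = (\<Sum>i<m. \<Sum>u\<in>hamming_space m. if i \<in> u then Q u else 0)" by (rule sum.swap)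
  also have "\<dots> = (\<Sum>i<m. \<Sum>u\<in>{u\<in>hamming_space m. i \<in> u}. Q u)"
    by (simp add: sum.inter_filter[symmetric] hamming_space_def)
  finally show ?thesis .
qed

lemma logsum:
  fixes a1 a2 b1 b2 :: real
  assumes "0 \<le> a1" "0 \<le> a2" "0 \<le> b1" "0 \<le> b2" "a1 > 0 \<Longrightarrow> b1 > 0" "a2 > 0 \<Longrightarrow> b2 > 0"
  shows "(a1+a2)*ln((a1+a2)/(b1+b2)) \<le> a1*ln(a1/b1) + a2*ln(a2/b2)"
proof (cases "a1 = 0")
  case True
  show ?thesis
  proof (cases "a2 = 0")
    case False
    then have "a2 > 0" "b2 > 0" using assms by auto
    then have "ln (a2/(b1+b2)) \<le> ln (a2/b2)" using assms
      by (intro ln_mono) (auto intro!: divide_left_mono)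
    then show ?thesis using True \<open>a2 > 0\<close> by simp
  qed (use True in simp)
next
  case a1: False
  show ?thesis
  proof (cases "a2 = 0")
    case True
    have "a1 > 0" "b1 > 0" using assms a1 by auto
    then have "ln (a1/(b1+b2)) \<le> ln (a1/b1)" using assms
      by (intro ln_mono) (auto intro!: divide_left_mono)
    then show ?thesis using True \<open>a1 > 0\<close> by simp
  next
    case False
    have p: "a1 > 0" "b1 > 0" "a2 > 0" "b2 > 0" using assms a1 False by auto
    define A where "A = a1 + a2"
    define B where "B = b1 + b2"
    have AB: "A > 0" "B > 0" using p by (auto simp: A_def B_def)
    have key: "a * ln (a/b) - a * ln (A/B) \<ge> a - b * A / B" if "a > 0" "b > 0" for a b
    proof -
      have y: "(b*A)/(a*B) > 0" using that AB by simp
      have "ln ((b*A)/(a*B)) \<le> (b*A)/(a*B) - 1" by (rule ln_le_minus_one[OF y])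
      moreover have "ln ((b*A)/(a*B)) = ln (A/B) - ln (a/b)"
        using that AB by (simp add: ln_div ln_mult)
      ultimately have "ln (a/b) - ln (A/B) \<ge> 1 - (b*A)/(a*B)" by simp
      then have "a * (ln (a/b) - ln (A/B)) \<ge> a * (1 - (b*A)/(a*B))"
        using that by (intro mult_left_mono) auto
      also have "a * (1 - (b*A)/(a*B)) = a - b*A/B" using that AB by (simp add: field_simps)
      finally show ?thesis by (simp add: algebra_simps)
    qed
    have "a1 - b1*A/B + (a2 - b2*A/B) = 0" using AB by (simp add: A_def B_def field_simps)
    moreover have "A * ln (A/B) = a1 * ln (A/B) + a2 * ln (A/B)" by (simp add: A_def distrib_right)
    ultimately show ?thesis using key[OF p(1,2)] key[OF p(3,4)]
      unfolding A_def[symmetric] B_def[symmetric] by linarith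
  qed
qed

definition phi :: "real \<Rightarrow> real \<Rightarrow> real" where
  "phi q s = - q * log 2 (q / s)"

lemma phi_concave:
  fixes q1 q2 s1 s2 t :: real
  assumes "0 \<le> q1" "q1 \<le> s1" "0 \<le> q2" "q2 \<le> s2" "0 \<le> t" "t \<le> 1"
  shows "t * phi q1 s1 + (1-t) * phi q2 s2 \<le> phi (t*q1+(1-t)*q2) (t * s1+(1-t) * s2)"
proof (cases "t = 0 \<or> t = 1")
  case True then show ?thesis by auto
next
  case False
  then have t: "0 < t" "0 < 1 - t" using assms by auto
  have L: "(t*q1+(1-t)*q2)*ln((t*q1+(1-t)*q2)/(t * s1+(1-t) * s2)) \<le>
           (t*q1)*ln((t*q1)/(t * s1)) + ((1-t)*q2)*ln(((1-t)*q2)/((1-t) * s2))"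
    using assms t by (intro logsum) (auto simp: zero_less_mult_iff)
  have e1: "(t*q1)/(t * s1) = q1/s1" using t by simp
  have e2: "((1-t)*q2)/((1-t) * s2) = q2/s2" using t by simp
  have "(t*q1+(1-t)*q2)*ln((t*q1+(1-t)*q2)/(t * s1+(1-t) * s2)) \<le>
           t*(q1*ln(q1/s1)) + (1-t)*(q2*ln(q2/s2))"
    using L unfolding e1 e2 by (simp add: algebra_simps)
  then have "- ((t*q1+(1-t)*q2)*ln((t*q1+(1-t)*q2)/(t * s1+(1-t) * s2))) / ln 2 \<ge>
           - (t*(q1*ln(q1/s1)) + (1-t)*(q2*ln(q2/s2))) / ln 2"
    by (intro divide_right_mono) auto
  moreover have "t * (- (q1*ln(q1/s1)) / ln 2) + (1-t) * (- (q2*ln(q2/s2)) / ln 2)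
      = - (t*(q1*ln(q1/s1)) + (1-t)*(q2*ln(q2/s2))) / ln 2"
    by (simp add: field_simps)
  moreover have e: "\<And>q s. phi q s = - (q*ln(q/s)) / ln 2" by (simp add: phi_def log_def)
  ultimately show ?thesis unfolding e by linarith
qed

lemma gibbs_ln:
  fixes q p :: "'a \<Rightarrow> real"
  assumes "finite C" "\<And>u. u \<in> C \<Longrightarrow> 0 \<le> q u" "\<And>u. u \<in> C \<Longrightarrow> 0 < p u"
    and S: "S = (\<Sum>u\<in>C. q u)" and P: "P = (\<Sum>u\<in>C. p u)" and "C \<noteq> {}"
  shows "(\<Sum>u\<in>C. q u * ln (p u / P)) \<le> (\<Sum>u\<in>C. q u * ln (q u / S))"
proof -
  have Ppos: "P > 0" unfolding P using assms by (intro sum_pos) auto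
  have trm: "q u * ln (q u / S) - q u * ln (p u / P) \<ge> q u - S * p u / P" if u: "u \<in> C" for u
  proof (cases "q u = 0")
    case True
    have "S \<ge> 0" unfolding S using assms by (intro sum_nonneg) auto
    then show ?thesis using True Ppos assms(3)[OF u] by simp
  next
    case False
    then have qp: "q u > 0" using assms(2)[OF u] by simp
    have "q u \<le> S" unfolding S using assms u by (intro member_le_sum) auto
    then have Sp: "S > 0" using qp by simp
    have pp: "p u > 0" using assms(3)[OF u] .
    have y: "(p u / P) / (q u / S) > 0" using pp Ppos qp Sp by simp
    have "ln ((p u / P) / (q u / S)) \<le> (p u / P) / (q u / S) - 1" by (rule ln_le_minus_one[OF y])
    moreover have "ln ((p u / P) / (q u / S)) = ln (p u / P) - ln (q u / S)"
      using pp Ppos qp Sp by (simp add: ln_div ln_mult)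
    ultimately have "ln (q u / S) - ln (p u / P) \<ge> 1 - (p u / P) / (q u / S)" by simp
    then have "q u * (ln (q u / S) - ln (p u / P)) \<ge> q u * (1 - (p u / P) / (q u / S))"
      using qp by (intro mult_left_mono) auto
    also have "q u * (1 - (p u / P) / (q u / S)) = q u - S * p u / P"
      using qp Sp Ppos by (simp add: field_simps)
    finally show ?thesis by (simp add: algebra_simps)
  qed
  have "(\<Sum>u\<in>C. q u - S * p u / P) = 0"
    using Ppos by (simp add: sum_subtractf S P sum_divide_distrib[symmetric] sum_distrib_left[symmetric])
  moreover have "(\<Sum>u\<in>C. q u - S * p u / P) \<le> (\<Sum>u\<in>C. q u * ln (q u / S) - q u * ln (p u / P))"
    by (intro sum_mono trm)
  ultimately show ?thesis by (simp add: sum_subtractf)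
qed

definition EV :: "nat \<Rightarrow> nat set set" where
  "EV m = {u\<in>hamming_space m. even (card u)}"
definition OD :: "nat \<Rightarrow> nat set set" where
  "OD m = {u\<in>hamming_space m. odd (card u)}"

definition Gf :: "nat \<Rightarrow> (nat set \<Rightarrow> real) \<Rightarrow> real" where
  "Gf m Q = (\<Sum>u\<in>EV m. phi (Q u) (sum Q (EV m))) + (\<Sum>u\<in>OD m. phi (Q u) (sum Q (OD m)))"

lemma fin_hs: "finite (hamming_space m)" by (simp add: hamming_space_def)
lemma fin_EV: "finite (EV m)" by (simp add: EV_def fin_hs)
lemma fin_OD: "finite (OD m)" by (simp add: OD_def fin_hs)

lemma sum_split: "sum f (hamming_space m) = sum f (EV m) + sum f (OD m)"
proof -
  have "hamming_space m = EV m \<union> OD m" "EV m \<inter> OD m = {}" by (auto simp: EV_def OD_def)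
  then show ?thesis by (simp add: sum.union_disjoint fin_EV fin_OD)
qed

lemma EV_sub: "EV m \<subseteq> hamming_space m" by (auto simp: EV_def)
lemma OD_sub: "OD m \<subseteq> hamming_space m" by (auto simp: OD_def)

lemma class_entropy:
  assumes "finite C" "\<And>u. u \<in> C \<Longrightarrow> 0 \<le> Q u"
  shows "(\<Sum>u\<in>C. - (Q u * log 2 (Q u))) = (\<Sum>u\<in>C. phi (Q u) (sum Q C)) - sum Q C * log 2 (sum Q C)"
proof -
  have t: "- (Q u * log 2 (Q u)) = phi (Q u) (sum Q C) - Q u * log 2 (sum Q C)" if u: "u \<in> C" for u
  proof (cases "Q u = 0")
    case True then show ?thesis by (simp add: phi_def)
  next
    case False
    then have qp: "Q u > 0" using assms(2)[OF u] by simp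
    have "Q u \<le> sum Q C" using assms u by (intro member_le_sum) auto
    then have "sum Q C > 0" using qp by simp
    then show ?thesis using qp by (simp add: phi_def log_divide_pos algebra_simps)
  qed
  have "(\<Sum>u\<in>C. - (Q u * log 2 (Q u))) = (\<Sum>u\<in>C. phi (Q u) (sum Q C) - Q u * log 2 (sum Q C))"
    by (rule sum.cong) (auto simp: t)
  also have "\<dots> = (\<Sum>u\<in>C. phi (Q u) (sum Q C)) - sum Q C * log 2 (sum Q C)"
    by (simp add: sum_subtractf sum_distrib_right)
  finally show ?thesis .
qed

lemma feasible_OD: "feasible m \<gamma> \<delta> Q \<Longrightarrow> sum Q (OD m) = \<delta>"
  by (simp add: feasible_def OD_def)
lemma feasible_EV: "feasible m \<gamma> \<delta> Q \<Longrightarrow> sum Q (EV m) = 1 - \<delta>"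
  using sum_split[of Q m] feasible_OD[of m \<gamma> \<delta> Q] by (simp add: feasible_def)

lemma decomp:
  assumes f: "feasible m \<gamma> \<delta> Q"
  shows "entropy_dist m Q - bin_entropy \<delta> = Gf m Q"
proof -
  have nn: "\<And>u. u \<in> hamming_space m \<Longrightarrow> 0 \<le> Q u" using f by (simp add: feasible_def)
  have "entropy_dist m Q = (\<Sum>u\<in>EV m. - (Q u * log 2 (Q u))) + (\<Sum>u\<in>OD m. - (Q u * log 2 (Q u)))"
    unfolding entropy_dist_def by (simp add: sum_split)
  also have "\<dots> = ((\<Sum>u\<in>EV m. phi (Q u) (sum Q (EV m))) - sum Q (EV m) * log 2 (sum Q (EV m)))
     + ((\<Sum>u\<in>OD m. phi (Q u) (sum Q (OD m))) - sum Q (OD m) * log 2 (sum Q (OD m)))"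
    using nn EV_sub OD_sub by (simp add: class_entropy fin_EV fin_OD subset_iff)
  finally show ?thesis unfolding Gf_def bin_entropy_def feasible_EV[OF f] feasible_OD[OF f] by simp
qed

lemma class_concave:
  assumes "finite C" "\<And>u. u \<in> C \<Longrightarrow> 0 \<le> A u" "\<And>u. u \<in> C \<Longrightarrow> 0 \<le> B u" "0 \<le> t" "t \<le> 1"
  shows "t * (\<Sum>u\<in>C. phi (A u) (sum A C)) + (1 - t) * (\<Sum>u\<in>C. phi (B u) (sum B C))
     \<le> (\<Sum>u\<in>C. phi (t * A u + (1 - t) * B u) (sum (\<lambda>u. t * A u + (1 - t) * B u) C))"
proof -
  have S: "sum (\<lambda>u. t * A u + (1 - t) * B u) C = t * sum A C + (1 - t) * sum B C"
    by (simp add: sum.distrib sum_distrib_left)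
  have "t * (\<Sum>u\<in>C. phi (A u) (sum A C)) + (1 - t) * (\<Sum>u\<in>C. phi (B u) (sum B C))
      = (\<Sum>u\<in>C. t * phi (A u) (sum A C) + (1 - t) * phi (B u) (sum B C))"
    by (simp add: sum.distrib sum_distrib_left)
  also have "\<dots> \<le> (\<Sum>u\<in>C. phi (t * A u + (1 - t) * B u) (t * sum A C + (1 - t) * sum B C))"
  proof (rule sum_mono)
    fix u assume u: "u \<in> C"
    have "A u \<le> sum A C" "B u \<le> sum B C" using assms u by (auto intro!: member_le_sum)
    then show "t * phi (A u) (sum A C) + (1 - t) * phi (B u) (sum B C)
        \<le> phi (t * A u + (1 - t) * B u) (t * sum A C + (1 - t) * sum B C)"
      using assms u by (intro phi_concave) auto
  qed
  finally show ?thesis unfolding S .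
qed

lemma Gf_concave:
  assumes "\<And>u. u \<in> hamming_space m \<Longrightarrow> 0 \<le> A u" "\<And>u. u \<in> hamming_space m \<Longrightarrow> 0 \<le> B u"
    "0 \<le> t" "t \<le> 1"
  shows "t * Gf m A + (1 - t) * Gf m B \<le> Gf m (\<lambda>u. t * A u + (1 - t) * B u)"
proof -
  have "t * (\<Sum>u\<in>EV m. phi (A u) (sum A (EV m))) + (1 - t) * (\<Sum>u\<in>EV m. phi (B u) (sum B (EV m)))
     \<le> (\<Sum>u\<in>EV m. phi (t * A u + (1 - t) * B u) (sum (\<lambda>u. t * A u + (1 - t) * B u) (EV m)))"
    using assms EV_sub by (intro class_concave) (auto simp: fin_EV)
  moreover have "t * (\<Sum>u\<in>OD m. phi (A u) (sum A (OD m))) + (1 - t) * (\<Sum>u\<in>OD m. phi (B u) (sum B (OD m)))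
     \<le> (\<Sum>u\<in>OD m. phi (t * A u + (1 - t) * B u) (sum (\<lambda>u. t * A u + (1 - t) * B u) (OD m)))"
    using assms OD_sub by (intro class_concave) (auto simp: fin_OD)
  ultimately show ?thesis unfolding Gf_def by (simp add: algebra_simps)
qed

lemma feasible_mix:
  assumes "feasible m \<gamma> a A" "feasible m \<gamma> b B" "0 \<le> t" "t \<le> 1"
  shows "feasible m \<gamma> (t * a + (1 - t) * b) (\<lambda>u. t * A u + (1 - t) * B u)"
proof -
  have S: "\<And>X. sum (\<lambda>u. t * A u + (1 - t) * B u) X = t * sum A X + (1 - t) * sum B X"
    by (simp add: sum.distrib sum_distrib_left)
  have e: "t * x + (1 - t) * x = x" for x :: real by (simp add: algebra_simps)
  show ?thesis using assms unfolding feasible_def S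
    by (auto simp: e intro!: add_nonneg_nonneg mult_nonneg_nonneg)
qed

lemma class_gibbs:
  fixes r :: real
  assumes "finite C" "C \<noteq> {}" "\<And>u. u \<in> C \<Longrightarrow> 0 \<le> Q u" "0 < r"
  shows "(\<Sum>u\<in>C. phi (Q u) (sum Q C)) \<le>
     - log 2 r * (\<Sum>u\<in>C. Q u * card u) + sum Q C * log 2 (\<Sum>u\<in>C. r ^ card u)"
proof -
  define S where "S = sum Q C"
  define P where "P = (\<Sum>u\<in>C. r ^ card u)"
  have Ppos: "P > 0" unfolding P_def using assms by (intro sum_pos) auto
  have G: "(\<Sum>u\<in>C. Q u * ln (r ^ card u / P)) \<le> (\<Sum>u\<in>C. Q u * ln (Q u / S))"
    using assms by (intro gibbs_ln[OF assms(1)]) (auto simp: S_def P_def)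
  have e1: "(\<Sum>u\<in>C. phi (Q u) S) = - (\<Sum>u\<in>C. Q u * ln (Q u / S)) / ln 2"
  proof -
    have "(\<Sum>u\<in>C. phi (Q u) S) = (\<Sum>u\<in>C. (- (Q u * ln (Q u / S))) / ln 2)"
      by (rule sum.cong) (simp_all add: phi_def log_def)
    also have "\<dots> = (\<Sum>u\<in>C. - (Q u * ln (Q u / S))) / ln 2"
      by (rule sum_divide_distrib[symmetric])
    finally show ?thesis by (simp add: sum_negf)
  qed
  have e2: "(\<Sum>u\<in>C. Q u * ln (r ^ card u / P)) = ln r * (\<Sum>u\<in>C. Q u * card u) - S * ln P"
  proof -
    have "(\<Sum>u\<in>C. Q u * ln (r ^ card u / P)) = (\<Sum>u\<in>C. ln r * (Q u * card u) - Q u * ln P)"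
    proof (rule sum.cong)
      fix u assume "u \<in> C"
      have h: "ln (r ^ card u / P) = card u * ln r - ln P"
        using assms(4) Ppos by (simp add: ln_div ln_realpow)
      show "Q u * ln (r ^ card u / P) = ln r * (Q u * card u) - Q u * ln P"
        unfolding h by (simp add: algebra_simps)
    qed simp
    also have "\<dots> = ln r * (\<Sum>u\<in>C. Q u * card u) - S * ln P"
      by (simp add: sum_subtractf sum_distrib_left sum_distrib_right S_def)
    finally show ?thesis .
  qed
  have "- (\<Sum>u\<in>C. Q u * ln (Q u / S)) / ln 2 \<le> - (\<Sum>u\<in>C. Q u * ln (r ^ card u / P)) / ln 2"
    using G by (intro divide_right_mono) auto
  also have "\<dots> = - log 2 r * (\<Sum>u\<in>C. Q u * card u) + S * log 2 P"
    unfolding e2 log_def by (simp add: field_simps)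
  finally have X: "- (\<Sum>u\<in>C. Q u * ln (Q u / S)) / ln 2 \<le> - log 2 r * (\<Sum>u\<in>C. Q u * card u) + S * log 2 P" .
  show ?thesis using X e1 unfolding S_def P_def by linarith
qed

lemma hs_pow: "hamming_space m = Pow {..<m}" by (simp add: hamming_space_def)

lemma Z_diff:
  fixes r :: real
  shows "(\<Sum>u\<in>EV m. r ^ card u) - (\<Sum>u\<in>OD m. r ^ card u) = (1 - r) ^ m"
proof -
  have "(\<Sum>u\<in>hamming_space m. (-r) ^ card u) = (1 - r) ^ m"
    unfolding hs_pow using gf_pow[of "{..<m}" "-r"] by simp
  moreover have "(\<Sum>u\<in>EV m. (-r) ^ card u) = (\<Sum>u\<in>EV m. r ^ card u)"
    by (rule sum.cong) (auto simp: EV_def)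
  moreover have "(\<Sum>u\<in>OD m. (-r) ^ card u) = - (\<Sum>u\<in>OD m. r ^ card u)"
    by (simp add: sum_negf[symmetric]) (rule sum.cong, auto simp: OD_def)
  ultimately show ?thesis using sum_split[of "\<lambda>u. (-r) ^ card u" m] by simp
qed

lemma empty_EV: "{} \<in> EV m" by (simp add: EV_def hamming_space_def)
lemma zero_OD: "0 < m \<Longrightarrow> {0} \<in> OD m" by (simp add: OD_def hamming_space_def)

lemma gibbs:
  fixes r :: real
  assumes f: "feasible m \<gamma> \<delta> Q" and m: "0 < m" and r: "0 < r" "r \<le> 1"
  shows "Gf m Q \<le> - log 2 r * (m * \<gamma>) + log 2 (\<Sum>u\<in>EV m. r ^ card u)"
proof -
  define Ze where "Ze = (\<Sum>u\<in>EV m. r ^ card u)"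
  define Zo where "Zo = (\<Sum>u\<in>OD m. r ^ card u)"
  have nn: "\<And>u. u \<in> hamming_space m \<Longrightarrow> 0 \<le> Q u" using f by (simp add: feasible_def)
  have g1: "(\<Sum>u\<in>EV m. phi (Q u) (sum Q (EV m))) \<le>
     - log 2 r * (\<Sum>u\<in>EV m. Q u * card u) + sum Q (EV m) * log 2 Ze"
    unfolding Ze_def using nn EV_sub empty_EV[of m] r by (intro class_gibbs) (auto simp: fin_EV)
  have g2: "(\<Sum>u\<in>OD m. phi (Q u) (sum Q (OD m))) \<le>
     - log 2 r * (\<Sum>u\<in>OD m. Q u * card u) + sum Q (OD m) * log 2 Zo"
    unfolding Zo_def using nn OD_sub zero_OD[OF m] r by (intro class_gibbs) (auto simp: fin_OD)
  have W: "(\<Sum>u\<in>EV m. Q u * card u) + (\<Sum>u\<in>OD m. Q u * card u) = m * \<gamma>"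
    using sum_split[of "\<lambda>u. Q u * card u" m] weight_sum[of Q m] f by (simp add: feasible_def)
  have Zopos: "Zo > 0" unfolding Zo_def using zero_OD[OF m] r
    by (intro sum_pos2[where i="{0}"]) (auto simp: fin_OD)
  have "Ze - Zo = (1 - r) ^ m" unfolding Ze_def Zo_def by (rule Z_diff)
  moreover have "(1 - r) ^ m \<ge> 0" using r by simp
  ultimately have "Zo \<le> Ze" by linarith
  then have lz: "log 2 Zo \<le> log 2 Ze" using Zopos by simp
  have d: "sum Q (OD m) = \<delta>" "sum Q (EV m) = 1 - \<delta>" using feasible_OD[OF f] feasible_EV[OF f] by auto
  have "\<delta> \<ge> 0" unfolding d(1)[symmetric] using nn OD_sub by (intro sum_nonneg) auto
  then have "\<delta> * log 2 Zo \<le> \<delta> * log 2 Ze" using lz by (intro mult_left_mono)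
  moreover have "log 2 r * (\<Sum>u\<in>EV m. Q u * card u) + log 2 r * (\<Sum>u\<in>OD m. Q u * card u) = log 2 r * (m * \<gamma>)"
    using W by (simp add: distrib_left[symmetric])
  moreover have "(1 - \<delta>) * log 2 Ze = log 2 Ze - \<delta> * log 2 Ze" by (simp add: algebra_simps)
  moreover have "\<And>x. - log 2 r * x = - (log 2 r * x)" by simp
  ultimately show ?thesis using g1 g2 unfolding Gf_def Ze_def[symmetric] d by linarith
qed

definition Ze :: "nat \<Rightarrow> real \<Rightarrow> real" where
  "Ze m r = (\<Sum>u\<in>EV m. r ^ card u)"
definition Rdist :: "nat \<Rightarrow> real \<Rightarrow> nat set \<Rightarrow> real" where
  "Rdist m r u = (if even (card u) then r ^ card u / Ze m r else 0)"
definition gm :: "nat \<Rightarrow> real \<Rightarrow> real" where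
  "gm m r = (r * (1 + r) ^ (m - 1) - r * (1 - r) ^ (m - 1)) / ((1 + r) ^ m + (1 - r) ^ m)"

lemma even_part:
  fixes r :: real
  shows "(\<Sum>u\<in>X. if even (card u) then r ^ card u else 0) = ((\<Sum>u\<in>X. r ^ card u) + (\<Sum>u\<in>X. (-r) ^ card u)) / 2"
proof -
  have "(\<Sum>u\<in>X. if even (card u) then r ^ card u else 0) = (\<Sum>u\<in>X. (r ^ card u + (-r) ^ card u) / 2)"
    by (rule sum.cong) auto
  also have "\<dots> = ((\<Sum>u\<in>X. r ^ card u) + (\<Sum>u\<in>X. (-r) ^ card u)) / 2"
    by (simp add: sum_divide_distrib[symmetric] sum.distrib)
  finally show ?thesis .
qed

lemma Ze_alt: "Ze m r = (\<Sum>u\<in>hamming_space m. if even (card u) then r ^ card u else 0)"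
  unfolding Ze_def EV_def by (rule sum.inter_filter[OF fin_hs])

lemma Ze_formula: "Ze m r = ((1 + r) ^ m + (1 - r) ^ m) / 2"
  unfolding Ze_alt even_part hs_pow using gf_pow[of "{..<m}" r] gf_pow[of "{..<m}" "-r"] by simp

lemma Ze_pos: "0 < r \<Longrightarrow> 0 < Ze m r"
  unfolding Ze_def by (rule sum_pos2[where i="{}"]) (auto simp: fin_EV empty_EV)

lemma Re_alt: "Rdist m r u = (if even (card u) then r ^ card u else 0) / Ze m r"
  by (simp add: Rdist_def)

lemma half_div: "(A::real) / 2 / (B / 2) = A / B" by simp

lemma aux_ring: "- ((a::real) * (k * b - c)) = - b * (a * k) + c * a" by (simp add: algebra_simps)

lemma marg_formula:
  assumes "i < m" "0 < r"
  shows "(\<Sum>u\<in>{u\<in>hamming_space m. i \<in> u}. Rdist m r u) = gm m r"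
proof -
  have "(\<Sum>u\<in>{u\<in>hamming_space m. i \<in> u}. Rdist m r u)
     = (\<Sum>u\<in>{u\<in>Pow {..<m}. i \<in> u}. if even (card u) then r ^ card u else 0) / Ze m r"
    unfolding Re_alt hs_pow by (rule sum_divide_distrib[symmetric])
  also have "\<dots> = ((r * (1 + r) ^ (m - 1) + (-r) * (1 + - r) ^ (m - 1)) / 2) / Ze m r"
    unfolding even_part gf_pow_i[OF assms(1)] ..
  also have "\<dots> = ((r * (1 + r) ^ (m - 1) - r * (1 - r) ^ (m - 1)) / 2) / (((1 + r) ^ m + (1 - r) ^ m) / 2)"
    unfolding Ze_formula by simp
  also have "\<dots> = gm m r" unfolding gm_def by (rule half_div)
  finally show ?thesis .
qed

lemma Re_nonneg: "0 < r \<Longrightarrow> 0 \<le> Rdist m r u"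
  using Ze_pos[of r m] by (simp add: Rdist_def)

lemma Re_sum: "0 < r \<Longrightarrow> (\<Sum>u\<in>hamming_space m. Rdist m r u) = 1"
  using Ze_pos[of r m] unfolding Re_alt by (simp add: sum_divide_distrib[symmetric] Ze_alt[symmetric])

lemma Re_feasible:
  assumes "0 < r" "gm m r = \<gamma>"
  shows "feasible m \<gamma> 0 (Rdist m r)"
  unfolding feasible_def
proof (intro conjI ballI allI impI)
  show "(\<Sum>u\<in>{u\<in>hamming_space m. odd (card u)}. Rdist m r u) = 0"
    by (rule sum.neutral) (auto simp: Rdist_def)
qed (use assms in \<open>auto simp: Re_nonneg Re_sum marg_formula\<close>)

lemma Re_entropy:
  assumes "0 < r" "gm m r = \<gamma>"
  shows "entropy_dist m (Rdist m r) = - log 2 r * (m * \<gamma>) + log 2 (Ze m r)"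
proof -
  have Z: "Ze m r > 0" using Ze_pos[OF assms(1)] .
  have t: "- (Rdist m r u * log 2 (Rdist m r u)) = - log 2 r * (Rdist m r u * card u) + log 2 (Ze m r) * Rdist m r u" for u
  proof (cases "even (card u)")
    case True
    have h: "log 2 (r ^ card u / Ze m r) = card u * log 2 r - log 2 (Ze m r)"
      using assms Z by (simp add: log_divide_pos log_nat_power)
    have e: "Rdist m r u = r ^ card u / Ze m r" using True by (simp add: Rdist_def)
    show ?thesis unfolding e h by (rule aux_ring)
  qed (simp add: Rdist_def)
  have "entropy_dist m (Rdist m r) = - log 2 r * (\<Sum>u\<in>hamming_space m. Rdist m r u * card u) + log 2 (Ze m r) * (\<Sum>u\<in>hamming_space m. Rdist m r u)"
    unfolding entropy_dist_def t by (simp only: sum.distrib sum_distrib_left)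
  also have "(\<Sum>u\<in>hamming_space m. Rdist m r u * card u) = m * \<gamma>"
    unfolding weight_sum using assms by (simp add: marg_formula)
  finally show ?thesis using Re_sum[OF assms(1)] by simp
qed

lemma exists_r:
  assumes "1 < m" "0 < \<gamma>" "\<gamma> < 1/2"
  shows "\<exists>r. 0 < r \<and> r \<le> 1 \<and> gm m r = \<gamma>"
proof -
  have nz: "\<forall>x\<in>{0..1::real}. (1 + x) ^ m + (1 - x) ^ m \<noteq> 0"
  proof
    fix x :: real assume "x \<in> {0..1}"
    then have "(1 + x) ^ m > 0" "(1 - x) ^ m \<ge> 0" by auto
    then show "(1 + x) ^ m + (1 - x) ^ m \<noteq> 0" by linarith
  qed
  have c: "continuous_on {0..1} (gm m)"
    unfolding gm_def using nz by (intro continuous_intros) auto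
  have g0: "gm m 0 = 0" by (simp add: gm_def)
  define k where "k = m - 2"
  have k: "m = Suc (Suc k)" unfolding k_def using assms(1) by arith
  have "gm m 1 = 2 ^ Suc k / 2 ^ Suc (Suc k)" unfolding k by (simp add: gm_def)
  also have "\<dots> = 1/2" by simp
  finally have g1: "gm m 1 = 1/2" .
  obtain r where r: "0 \<le> r" "r \<le> 1" "gm m r = \<gamma>"
    using IVT'[of "gm m" 0 \<gamma> 1] c g0 g1 assms by auto
  moreover have "r \<noteq> 0" using r g0 assms by auto
  ultimately show ?thesis by (metis order_le_less)
qed

lemma improve:
  assumes m: "1 < m" and g: "0 < \<gamma>" "\<gamma> < 1/2" and d: "0 \<le> \<delta>1" "\<delta>1 \<le> \<delta>2"
    and f: "feasible m \<gamma> \<delta>2 Q"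
  shows "\<exists>Q1. feasible m \<gamma> \<delta>1 Q1 \<and> entropy_dist m Q - bin_entropy \<delta>2 \<le> entropy_dist m Q1 - bin_entropy \<delta>1"
proof (cases "\<delta>1 = \<delta>2")
  case True then show ?thesis using f by auto
next
  case False
  then have d2: "0 < \<delta>2" using d by auto
  obtain r where r: "0 < r" "r \<le> 1" "gm m r = \<gamma>" using exists_r[OF m g] by auto
  define R where "R = Rdist m r"
  have fR: "feasible m \<gamma> 0 R" unfolding R_def by (rule Re_feasible[OF r(1,3)])
  have "Gf m R = entropy_dist m R" using decomp[OF fR] by (simp add: bin_entropy_def)
  also have "\<dots> = - log 2 r * (m * \<gamma>) + log 2 (Ze m r)" unfolding R_def by (rule Re_entropy[OF r(1,3)])
  finally have GR: "Gf m Q \<le> Gf m R" using gibbs[OF f _ r(1,2)] m unfolding Ze_def by simp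
  define t where "t = \<delta>1 / \<delta>2"
  have t: "0 \<le> t" "t \<le> 1" using d d2 by (auto simp: t_def)
  define Q1 where "Q1 = (\<lambda>u. t * Q u + (1 - t) * R u)"
  have "feasible m \<gamma> (t * \<delta>2 + (1 - t) * 0) Q1" unfolding Q1_def by (rule feasible_mix[OF f fR t])
  moreover have "t * \<delta>2 + (1 - t) * 0 = \<delta>1" using d2 by (simp add: t_def)
  ultimately have f1: "feasible m \<gamma> \<delta>1 Q1" by simp
  have nnQ: "\<And>u. u \<in> hamming_space m \<Longrightarrow> 0 \<le> Q u" using f by (simp add: feasible_def)
  have nnR: "\<And>u. u \<in> hamming_space m \<Longrightarrow> 0 \<le> R u" using fR by (simp add: feasible_def)
  have "t * Gf m Q + (1 - t) * Gf m R \<le> Gf m Q1" unfolding Q1_def by (rule Gf_concave[OF nnQ nnR t])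
  moreover have "t * Gf m Q + (1 - t) * Gf m Q \<le> t * Gf m Q + (1 - t) * Gf m R"
    using GR t by (intro add_left_mono mult_left_mono) auto
  ultimately have "Gf m Q \<le> Gf m Q1" by (simp add: algebra_simps)
  then show ?thesis using f1 decomp[OF f] decomp[OF f1] by auto
qed

theorem mainTheorem15:
  fixes m :: nat and \<gamma> \<delta>1 \<delta>2 :: real
  assumes "m > 1" and "0 < \<gamma>" and "\<gamma> < 1/2"
    and "0 \<le> \<delta>1" and "\<delta>1 \<le> \<delta>2" and "\<delta>2 \<le> 1"
  shows "F m \<gamma> \<delta>2 \<le> F m \<gamma> \<delta>1"
proof (cases "\<exists>Q. feasible m \<gamma> \<delta>2 Q")
  case False then show ?thesis by (simp add: F_def)
next
  case True
  have imp: "\<And>Q. feasible m \<gamma> \<delta>2 Q \<Longrightarrow> \<exists>Q1. feasible m \<gamma> \<delta>1 Q1 \<and>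
      entropy_dist m Q - bin_entropy \<delta>2 \<le> entropy_dist m Q1 - bin_entropy \<delta>1"
    using improve assms by blast
  then have ex1: "\<exists>Q. feasible m \<gamma> \<delta>1 Q" using True by blast
  let ?c = "bin_entropy \<delta>2 - bin_entropy \<delta>1"
  have "Hstar m \<gamma> \<delta>2 \<le> Hstar m \<gamma> \<delta>1 + ereal ?c"
    unfolding Hstar_def
  proof (rule Sup_least)
    fix x assume "x \<in> {ereal (entropy_dist m Q) | Q. feasible m \<gamma> \<delta>2 Q}"
    then obtain Q where Q: "x = ereal (entropy_dist m Q)" "feasible m \<gamma> \<delta>2 Q" by blast
    obtain Q1 where Q1: "feasible m \<gamma> \<delta>1 Q1"
      "entropy_dist m Q - bin_entropy \<delta>2 \<le> entropy_dist m Q1 - bin_entropy \<delta>1"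
      using imp[OF Q(2)] by blast
    have "ereal (entropy_dist m Q1) \<le> Sup {ereal (entropy_dist m Q) | Q. feasible m \<gamma> \<delta>1 Q}"
      using Q1(1) by (intro Sup_upper) blast
    then have "ereal (entropy_dist m Q1) + ereal ?c \<le> Sup {ereal (entropy_dist m Q) | Q. feasible m \<gamma> \<delta>1 Q} + ereal ?c"
      by (rule add_right_mono)
    moreover have "x \<le> ereal (entropy_dist m Q1) + ereal ?c" using Q Q1 by simp
    ultimately show "x \<le> Sup {ereal (entropy_dist m Q) | Q. feasible m \<gamma> \<delta>1 Q} + ereal ?c" by (rule order_trans[rotated])
  qed
  then have "Hstar m \<gamma> \<delta>2 - ereal (bin_entropy \<delta>2) \<le> Hstar m \<gamma> \<delta>1 + ereal ?c - ereal (bin_entropy \<delta>2)"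
    by (rule ereal_minus_mono) simp
  also have "\<dots> = Hstar m \<gamma> \<delta>1 - ereal (bin_entropy \<delta>1)"
    by (cases "Hstar m \<gamma> \<delta>1") auto
  finally show ?thesis using True ex1 by (simp add: F_def)
qed

end
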